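(* Let $n\ge2$. The group $VSG_n$ has a presentation with generators $\{\mu_{i,i+1},\gamma_{i,i+1},v_i\mid 1\le i\le n-1\}$ (where $\mu_{i,i+1}=\sigma_iv_i$ and $\gamma_{i,i+1}=\tau_iv_i$) and defining relations: $v_i^2=1$; $v_iv_jv_i=v_jv_iv_j$ for $|i-j|=1$; $v_i\mu_{j,j+1}v_i=v_j\mu_{i,i+1}v_j$ for $|i-j|=1$; $v_i\gamma_{j,j+1}v_i=v_j\gamma_{i,i+1}v_j$ for $|i-j|=1$; $\mu_{j,j+1}(v_j\mu_{i,i+1}v_j)\mu_{i,i+1}=\mu_{i,i+1}(v_j\mu_{i,i+1}v_j)\mu_{j,j+1}$ for $|i-j|=1$; $\mu_{j,j+1}(v_j\mu_{i,i+1}v_j)\gamma_{i,i+1}=\gamma_{i,i+1}(v_j\mu_{i,i+1}v_j)\mu_{j,j+1}$ for $|i-j|=1$; $\mu_{i,i+1}v_i\gamma_{i,i+1}=\gamma_{i,i+1}v_i\mu_{i,i+1}$ for all $i$; $\alpha_i\beta_j=\beta_j\alpha_i$ for $|i-j|>1$, where $\alpha_i,\beta_i\in\{\mu_{i,i+1},\gamma_{i,i+1},v_i\}$.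
   Context: Let $n\ge 2$. The virtual singular braid group $VSG_n$ is the group generated by $\sigma_i,v_i,\tau_i$ ($1\le i\le n-1$) subject to: $v_i^2=1$; $\sigma_i\tau_i=\tau_i\sigma_i$; for $|i-j|=1$: $\sigma_i\sigma_j\sigma_i=\sigma_j\sigma_i\sigma_j$, $v_iv_jv_i=v_jv_iv_j$, $v_i\sigma_jv_i=v_j\sigma_iv_j$, $v_i\tau_jv_i=v_j\tau_iv_j$, $\sigma_i\sigma_j\tau_i=\tau_j\sigma_i\sigma_j$; and for $|i-j|>1$: $g_ih_j=h_jg_i$ for all $g_i,h_i\in\{\sigma_i,\tau_i,v_i\}$. The elementary fusing strings are $\mu_{i,i+1}:=\sigma_iv_i$, $\mu_{i,i+1}^{-1}=v_i\sigma_i^{-1}$, $\gamma_{i,i+1}:=\tau_iv_i$, $\bar\gamma_{i,i+1}:=v_i\tau_i^{-1}=\gamma_{i,i+1}^{-1}$. *)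

theory Defs
  imports Main
begin

text \<open>A word over a generator type is a list of letters (a, e), where e = True means
  the generator a and e = False means its inverse.\<close>

type_synonym 'g word = "('g \<times> bool) list"

definition word_over :: "'g set \<Rightarrow> 'g word \<Rightarrow> bool" where
  "word_over S w \<longleftrightarrow> fst ` set w \<subseteq> S"

definition inv_word :: "'g word \<Rightarrow> 'g word" where
  "inv_word w = rev (map (\<lambda>(a, e). (a, \<not> e)) w)"

text \<open>Equality in the group with presentation (S | R): the smallest congruence on words
  over S containing free cancellation and the defining relations R.\<close>

inductive pres_eq :: "'g set \<Rightarrow> ('g word \<times> 'g word) set \<Rightarrow> 'g word \<Rightarrow> 'g word \<Rightarrow> bool"
  for S R where
  refl: "word_over S w \<Longrightarrow> pres_eq S R w w"
| sym: "pres_eq S R u w \<Longrightarrow> pres_eq S R w u"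
| trans: "pres_eq S R u v \<Longrightarrow> pres_eq S R v w \<Longrightarrow> pres_eq S R u w"
| cancel: "a \<in> S \<Longrightarrow> pres_eq S R [(a, e), (a, \<not> e)] []"
| rel: "(l, r) \<in> R \<Longrightarrow> pres_eq S R l r"
| append: "pres_eq S R u u' \<Longrightarrow> pres_eq S R v v' \<Longrightarrow> pres_eq S R (u @ v) (u' @ v')"

definition subst_word :: "('g \<Rightarrow> 'h word) \<Rightarrow> 'g word \<Rightarrow> 'h word" where
  "subst_word f w = concat (map (\<lambda>(a, e). if e then f a else inv_word (f a)) w)"

definition induces_iso ::
  "'g set \<Rightarrow> ('g word \<times> 'g word) set \<Rightarrow> 'h set \<Rightarrow> ('h word \<times> 'h word) set
   \<Rightarrow> ('g \<Rightarrow> 'h word) \<Rightarrow> bool" where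
  "induces_iso S1 R1 S2 R2 f \<longleftrightarrow>
     (\<forall>a\<in>S1. word_over S2 (f a)) \<and>
     (\<forall>w w'. pres_eq S1 R1 w w' \<longrightarrow> pres_eq S2 R2 (subst_word f w) (subst_word f w')) \<and>
     (\<forall>w w'. word_over S1 w \<and> word_over S1 w' \<and>
              pres_eq S2 R2 (subst_word f w) (subst_word f w') \<longrightarrow> pres_eq S1 R1 w w') \<and>
     (\<forall>u. word_over S2 u \<longrightarrow> (\<exists>w. word_over S1 w \<and> pres_eq S2 R2 (subst_word f w) u))"

datatype vsg_gen = Sig nat | Tau nat | Vg nat

definition gen :: "'g \<Rightarrow> 'g word" where "gen a = [(a, True)]"

definition vsg_gens :: "nat \<Rightarrow> vsg_gen set" where
  "vsg_gens n = {g i | g i. g \<in> {Sig, Tau, Vg} \<and> 1 \<le> i \<and> i < n}"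

definition adj :: "nat \<Rightarrow> nat \<Rightarrow> bool" where
  "adj i j \<longleftrightarrow> i = j + 1 \<or> j = i + 1"

definition far :: "nat \<Rightarrow> nat \<Rightarrow> bool" where
  "far i j \<longleftrightarrow> i + 1 < j \<or> j + 1 < i"

definition idx :: "nat \<Rightarrow> nat \<Rightarrow> bool" where
  "idx n i \<longleftrightarrow> 1 \<le> i \<and> i < n"

definition vsg_rels :: "nat \<Rightarrow> (vsg_gen word \<times> vsg_gen word) set" where
  "vsg_rels n =
     {(gen (Vg i) @ gen (Vg i), []) | i. idx n i}
   \<union> {(gen (Sig i) @ gen (Tau i), gen (Tau i) @ gen (Sig i)) | i. idx n i}
   \<union> {(gen (Sig i) @ gen (Sig j) @ gen (Sig i), gen (Sig j) @ gen (Sig i) @ gen (Sig j))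
       | i j. idx n i \<and> idx n j \<and> adj i j}
   \<union> {(gen (Vg i) @ gen (Vg j) @ gen (Vg i), gen (Vg j) @ gen (Vg i) @ gen (Vg j))
       | i j. idx n i \<and> idx n j \<and> adj i j}
   \<union> {(gen (Vg i) @ gen (Sig j) @ gen (Vg i), gen (Vg j) @ gen (Sig i) @ gen (Vg j))
       | i j. idx n i \<and> idx n j \<and> adj i j}
   \<union> {(gen (Vg i) @ gen (Tau j) @ gen (Vg i), gen (Vg j) @ gen (Tau i) @ gen (Vg j))
       | i j. idx n i \<and> idx n j \<and> adj i j}
   \<union> {(gen (Sig i) @ gen (Sig j) @ gen (Tau i), gen (Tau j) @ gen (Sig i) @ gen (Sig j))
       | i j. idx n i \<and> idx n j \<and> adj i j}
   \<union> {(gen (g i) @ gen (h j), gen (h j) @ gen (g i))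
       | g h i j. g \<in> {Sig, Tau, Vg} \<and> h \<in> {Sig, Tau, Vg} \<and> idx n i \<and> idx n j \<and> far i j}"

datatype fus_gen = Mu nat | Ga nat | Vf nat

definition fus_gens :: "nat \<Rightarrow> fus_gen set" where
  "fus_gens n = {g i | g i. g \<in> {Mu, Ga, Vf} \<and> 1 \<le> i \<and> i < n}"

definition fus_rels :: "nat \<Rightarrow> (fus_gen word \<times> fus_gen word) set" where
  "fus_rels n =
     {(gen (Vf i) @ gen (Vf i), []) | i. idx n i}
   \<union> {(gen (Vf i) @ gen (Vf j) @ gen (Vf i), gen (Vf j) @ gen (Vf i) @ gen (Vf j))
       | i j. idx n i \<and> idx n j \<and> adj i j}
   \<union> {(gen (Vf i) @ gen (Mu j) @ gen (Vf i), gen (Vf j) @ gen (Mu i) @ gen (Vf j))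
       | i j. idx n i \<and> idx n j \<and> adj i j}
   \<union> {(gen (Vf i) @ gen (Ga j) @ gen (Vf i), gen (Vf j) @ gen (Ga i) @ gen (Vf j))
       | i j. idx n i \<and> idx n j \<and> adj i j}
   \<union> {(gen (Mu j) @ (gen (Vf j) @ gen (Mu i) @ gen (Vf j)) @ gen (Mu i),
        gen (Mu i) @ (gen (Vf j) @ gen (Mu i) @ gen (Vf j)) @ gen (Mu j))
       | i j. idx n i \<and> idx n j \<and> adj i j}
   \<union> {(gen (Mu j) @ (gen (Vf j) @ gen (Mu i) @ gen (Vf j)) @ gen (Ga i),
        gen (Ga i) @ (gen (Vf j) @ gen (Mu i) @ gen (Vf j)) @ gen (Mu j))
       | i j. idx n i \<and> idx n j \<and> adj i j}
   \<union> {(gen (Mu i) @ gen (Vf i) @ gen (Ga i), gen (Ga i) @ gen (Vf i) @ gen (Mu i))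
       | i. idx n i}
   \<union> {(gen (g i) @ gen (h j), gen (h j) @ gen (g i))
       | g h i j. g \<in> {Mu, Ga, Vf} \<and> h \<in> {Mu, Ga, Vf} \<and> idx n i \<and> idx n j \<and> far i j}"

fun fus_to_vsg :: "fus_gen \<Rightarrow> vsg_gen word" where
  "fus_to_vsg (Mu i) = gen (Sig i) @ gen (Vg i)"
| "fus_to_vsg (Ga i) = gen (Tau i) @ gen (Vg i)"
| "fus_to_vsg (Vf i) = gen (Vg i)"

end

theory Submission imports Defs begin

definition wfR :: "'g set \<Rightarrow> ('g word \<times> 'g word) set \<Rightarrow> bool" where
  "wfR S R \<longleftrightarrow> (\<forall>(l,r)\<in>R. word_over S l \<and> word_over S r)"

lemma wo_simps[simp]:
  "word_over S []" "word_over S (x#xs) \<longleftrightarrow> fst x \<in> S \<and> word_over S xs"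
  "word_over S (xs@ys) \<longleftrightarrow> word_over S xs \<and> word_over S ys"
  by (auto simp: word_over_def)

lemma inv_simps[simp]:
  "inv_word [] = []" "inv_word (x#xs) = inv_word xs @ [(fst x, \<not> snd x)]"
  "inv_word (xs@ys) = inv_word ys @ inv_word xs"
  by (auto simp: inv_word_def split: prod.splits)

lemma inv_inv[simp]: "inv_word (inv_word w) = w"
  by (induction w) auto

lemma wo_inv[simp]: "word_over S (inv_word w) \<longleftrightarrow> word_over S w"
  by (induction w) auto

lemma wo_take: "word_over S X \<Longrightarrow> word_over S (take k X)"
  and wo_drop: "word_over S X \<Longrightarrow> word_over S (drop k X)"
  by (auto simp: word_over_def dest: in_set_takeD in_set_dropD)

lemma right_inv: "word_over S x \<Longrightarrow> pres_eq S R (x @ inv_word x) []"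
proof (induction x)
  case Nil then show ?case by (auto intro: pres_eq.refl)
next
  case (Cons y x)
  obtain a e where y: "y = (a,e)" by fastforce
  have "pres_eq S R ([(a,e)] @ (x @ inv_word x) @ [(a,\<not>e)]) ([(a,e)] @ [] @ [(a,\<not>e)])"
    using Cons y by (intro pres_eq.append pres_eq.refl) auto
  moreover have "pres_eq S R [(a,e),(a,\<not>e)] []" using Cons y by (intro pres_eq.cancel) auto
  ultimately show ?case using y by (auto intro: pres_eq.trans)
qed

lemma left_inv: "word_over S x \<Longrightarrow> pres_eq S R (inv_word x @ x) []"
  using right_inv[of S "inv_word x" R] by simp

lemma pe_over: assumes "wfR S R" shows "pres_eq S R u v \<Longrightarrow> word_over S u \<and> word_over S v"
  by (induction rule: pres_eq.induct) (use assms in \<open>auto simp: wfR_def\<close>)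

lemma inv_cong: assumes "wfR S R" shows "pres_eq S R u v \<Longrightarrow> pres_eq S R (inv_word u) (inv_word v)"
proof (induction rule: pres_eq.induct)
  case (refl w) then show ?case by (auto intro: pres_eq.refl)
next
  case (sym u w) then show ?case by (blast intro: pres_eq.sym)
next
  case (trans u v w) then show ?case by (blast intro: pres_eq.trans)
next
  case (cancel a e) then show ?case using pres_eq.cancel[of a S R e] by simp
next
  case (rel l r)
  have wl: "word_over S l" "word_over S r" using rel assms by (auto simp: wfR_def)
  have "pres_eq S R (inv_word l @ []) (inv_word l @ (r @ inv_word r))"
    using wl right_inv[of S r R] by (intro pres_eq.append pres_eq.refl) (auto intro: pres_eq.sym)
  moreover have "pres_eq S R ((inv_word l @ r) @ inv_word r) ((inv_word l @ l) @ inv_word r)"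
    using wl rel by (intro pres_eq.append pres_eq.refl) (auto intro: pres_eq.sym pres_eq.rel)
  moreover have "pres_eq S R ((inv_word l @ l) @ inv_word r) ([] @ inv_word r)"
    using wl left_inv[of S l R] by (intro pres_eq.append pres_eq.refl) auto
  ultimately show ?case by (auto intro: pres_eq.trans)
next
  case (append u u' v v') then show ?case using pres_eq.append by fastforce
qed

lemma subst_simps[simp]:
  "subst_word f [] = []"
  "subst_word f (x#xs) = (if snd x then f (fst x) else inv_word (f (fst x))) @ subst_word f xs"
  "subst_word f (xs@ys) = subst_word f xs @ subst_word f ys"
  by (auto simp: subst_word_def split: prod.splits)

lemma subst_inv[simp]: "subst_word f (inv_word w) = inv_word (subst_word f w)"
  by (induction w) auto

lemma subst_wo: "(\<forall>a\<in>S1. word_over S2 (f a)) \<Longrightarrow> word_over S1 w \<Longrightarrow> word_over S2 (subst_word f w)"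
  by (induction w) auto

lemma subst_cong:
  assumes fS: "\<forall>a\<in>S1. word_over S2 (f a)"
    and rels: "\<forall>(l,r)\<in>R1. pres_eq S2 R2 (subst_word f l) (subst_word f r)"
  shows "pres_eq S1 R1 w w' \<Longrightarrow> pres_eq S2 R2 (subst_word f w) (subst_word f w')"
proof (induction rule: pres_eq.induct)
  case (refl w) then show ?case using subst_wo[OF fS] by (auto intro: pres_eq.refl)
next
  case (sym u w) then show ?case by (blast intro: pres_eq.sym)
next
  case (trans u v w) then show ?case by (blast intro: pres_eq.trans)
next
  case (cancel a e) then show ?case using fS right_inv[of S2 "f a" R2] left_inv[of S2 "f a" R2] by auto
next
  case (rel l r) then show ?case using rels by auto
next
  case (append u u' v v') then show ?case using pres_eq.append by fastforce
qed

lemma subst_comp: "subst_word g (subst_word f w) = subst_word (\<lambda>a. subst_word g (f a)) w"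
  by (induction w) auto

lemma subst_id:
  assumes h: "\<forall>a\<in>S. pres_eq S R (h a) [(a,True)]" and wf: "wfR S R"
  shows "word_over S w \<Longrightarrow> pres_eq S R (subst_word h w) w"
proof (induction w)
  case Nil then show ?case by (auto intro: pres_eq.refl)
next
  case (Cons x w)
  obtain a e where x: "x = (a,e)" by fastforce
  have ha: "pres_eq S R (if e then h a else inv_word (h a)) [(a,e)]"
    using h inv_cong[OF wf, of "h a" "[(a,True)]"] Cons x by auto
  show ?case using pres_eq.append[OF ha Cons.IH] Cons x by auto
qed

lemma rw: "pres_eq S R l r \<Longrightarrow> word_over S X \<Longrightarrow> take (length l) (drop k X) = l \<Longrightarrow>
   pres_eq S R (take k X @ r @ drop (k + length l) X) Z \<Longrightarrow> pres_eq S R X Z"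
proof -
  assume lr: "pres_eq S R l r" and X: "word_over S X" and t: "take (length l) (drop k X) = l"
    and Z: "pres_eq S R (take k X @ r @ drop (k + length l) X) Z"
  have eq: "X = take k X @ l @ drop (k + length l) X"
    by (metis append_take_drop_id drop_drop add.commute t)
  have "pres_eq S R (take k X @ l @ drop (k + length l) X) (take k X @ r @ drop (k + length l) X)"
    using X lr by (intro pres_eq.append pres_eq.refl wo_take wo_drop) auto
  then show ?thesis using eq Z by (metis pres_eq.trans)
qed

lemma comm1: "(\<forall>b\<in>set B. pres_eq S R [a,b] [b,a]) \<Longrightarrow> fst a \<in> S \<Longrightarrow> word_over S B \<Longrightarrow>
   pres_eq S R (a # B) (B @ [a])"
proof (induction B)
  case Nil then show ?case by (auto intro: pres_eq.refl)
next
  case (Cons b B)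
  have "pres_eq S R ([a,b] @ B) ([b,a] @ B)" using Cons by (intro pres_eq.append pres_eq.refl) auto
  moreover have "pres_eq S R ([b] @ (a # B)) ([b] @ (B @ [a]))" using Cons by (intro pres_eq.append pres_eq.refl) auto
  ultimately show ?case by (auto intro: pres_eq.trans)
qed

lemma comm_words: "(\<forall>a\<in>set A. \<forall>b\<in>set B. pres_eq S R [a,b] [b,a]) \<Longrightarrow> word_over S A \<Longrightarrow> word_over S B \<Longrightarrow>
   pres_eq S R (A @ B) (B @ A)"
proof (induction A)
  case Nil then show ?case by (auto intro: pres_eq.refl)
next
  case (Cons a A)
  have "pres_eq S R ([a] @ (A @ B)) ([a] @ (B @ A))"
    using Cons by (intro pres_eq.append[OF pres_eq.refl]) auto
  moreover have "pres_eq S R ((a # B) @ A) ((B @ [a]) @ A)" using Cons comm1[of B S R a]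
    by (intro pres_eq.append pres_eq.refl) auto
  ultimately show ?case by (auto intro: pres_eq.trans)
qed


lemma G1:
  assumes L: "fst vi \<in> S" "fst vj \<in> S" "fst si \<in> S" "fst sj \<in> S"
  and vvi: "pres_eq S R [vi,vi] []" and vvj: "pres_eq S R [vj,vj] []"
  and br: "pres_eq S R [vi,vj,vi] [vj,vi,vj]" and cj: "pres_eq S R [vi,sj,vi] [vj,si,vj]"
  shows "pres_eq S R [vi,sj,vj,vi] [vj,si,vi,vj]"
  apply (rule rw[OF pres_eq.sym[OF vvi], where k=2], simp_all add: L)
  apply (rule rw[OF cj, where k=0], simp_all add: L)
  apply (rule rw[OF br, where k=3], simp_all add: L)
  apply (rule rw[OF vvj, where k=2], simp_all add: L)
  apply (rule pres_eq.refl, simp add: L)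
  done

lemma Gh:
  assumes L: "fst x \<in> S" "fst vi \<in> S" "fst vj \<in> S" "fst si \<in> S" "fst sj \<in> S"
  and vvi: "pres_eq S R [vi,vi] []" and vvj: "pres_eq S R [vj,vj] []"
  and br: "pres_eq S R [vi,vj,vi] [vj,vi,vj]" and cj: "pres_eq S R [vi,sj,vi] [vj,si,vj]"
  shows "pres_eq S R [x,vi,vj,si,vi,vj,sj,vj] [x,sj,si,vi,vj,vi]"
  apply (rule rw[OF pres_eq.sym[OF vvj], where k=4], simp_all add: L)
  apply (rule rw[OF pres_eq.sym[OF cj], where k=2], simp_all add: L)
  apply (rule rw[OF vvi, where k=1], simp_all add: L)
  apply (rule rw[OF br, where k=2], simp_all add: L)
  apply (rule rw[OF vvj, where k=4], simp_all add: L)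
  apply (rule rw[OF pres_eq.sym[OF vvi], where k=5], simp_all add: L)
  apply (rule rw[OF cj, where k=3], simp_all add: L)
  apply (rule rw[OF vvj, where k=2], simp_all add: L)
  apply (rule rw[OF pres_eq.sym[OF br], where k=3], simp_all add: L)
  apply (rule pres_eq.refl, simp add: L)
  done

lemma Gl:
  assumes L: "fst y \<in> S" "fst vi \<in> S" "fst vj \<in> S" "fst si \<in> S" "fst ti \<in> S" "fst tj \<in> S"
  and vvi: "pres_eq S R [vi,vi] []" and vvj: "pres_eq S R [vj,vj] []"
  and cjt: "pres_eq S R [vi,tj,vi] [vj,ti,vj]"
  shows "pres_eq S R [y,vj,vj,si,vi,vj,ti,vi] [y,si,tj,vi,vj,vi]"
  apply (rule rw[OF vvj, where k=1], simp_all add: L)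
  apply (rule rw[OF pres_eq.sym[OF vvj], where k=5], simp_all add: L)
  apply (rule rw[OF pres_eq.sym[OF cjt], where k=3], simp_all add: L)
  apply (rule rw[OF vvi, where k=2], simp_all add: L)
  apply (rule pres_eq.refl, simp add: L)
  done

lemma F5G:
  assumes L: "fst vi \<in> S" "fst vj \<in> S" "fst si \<in> S" "fst sj \<in> S"
  and vvi: "pres_eq S R [vi,vi] []" and vvj: "pres_eq S R [vj,vj] []"
  and br: "pres_eq S R [vi,vj,vi] [vj,vi,vj]" and cj: "pres_eq S R [vi,sj,vi] [vj,si,vj]"
  and sss: "pres_eq S R [si,sj,si] [sj,si,sj]"
  shows "pres_eq S R [sj,vj,vj,si,vi,vj,si,vi] [si,vi,vj,si,vi,vj,sj,vj]"
  apply (rule pres_eq.trans[OF Gl[OF _ _ _ _ _ _ vvi vvj cj]], simp_all add: L)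
  apply (rule rw[OF pres_eq.sym[OF sss], where k=0], simp_all add: L)
  apply (rule pres_eq.sym)
  apply (rule pres_eq.trans[OF Gh[OF _ _ _ _ _ vvi vvj br cj]], simp_all add: L)
  apply (rule pres_eq.refl, simp add: L)
  done

lemma F6G:
  assumes L: "fst vi \<in> S" "fst vj \<in> S" "fst si \<in> S" "fst sj \<in> S" "fst ti \<in> S" "fst tj \<in> S"
  and vvi: "pres_eq S R [vi,vi] []" and vvj: "pres_eq S R [vj,vj] []"
  and br: "pres_eq S R [vi,vj,vi] [vj,vi,vj]" and cj: "pres_eq S R [vi,sj,vi] [vj,si,vj]"
  and cjt: "pres_eq S R [vi,tj,vi] [vj,ti,vj]"
  and sst: "pres_eq S R [sj,si,tj] [ti,sj,si]"
  shows "pres_eq S R [sj,vj,vj,si,vi,vj,ti,vi] [ti,vi,vj,si,vi,vj,sj,vj]"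
  apply (rule pres_eq.trans[OF Gl[OF _ _ _ _ _ _ vvi vvj cjt]], simp_all add: L)
  apply (rule rw[OF sst, where k=0], simp_all add: L)
  apply (rule pres_eq.sym)
  apply (rule pres_eq.trans[OF Gh[OF _ _ _ _ _ vvi vvj br cj]], simp_all add: L)
  apply (rule pres_eq.refl, simp add: L)
  done

lemma B4G:
  assumes L: "fst vi \<in> S" "fst vj \<in> S" "fst mi \<in> S" "fst mj \<in> S"
  and vvi: "pres_eq S R [vi,vi] []" and vvj: "pres_eq S R [vj,vj] []"
  and br: "pres_eq S R [vi,vj,vi] [vj,vi,vj]" and cj: "pres_eq S R [vi,mj,vi] [vj,mi,vj]"
  and R5: "pres_eq S R [mj,vj,mi,vj,mi] [mi,vj,mi,vj,mj]"
  shows "pres_eq S R [mi,vi,mj,vj,mi,vi] [mj,vj,mi,vi,mj,vj]"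
  apply (rule rw[OF pres_eq.sym[OF vvi], where k=3], simp_all add: L)
  apply (rule rw[OF cj, where k=1], simp_all add: L)
  apply (rule rw[OF pres_eq.sym[OF vvj], where k=7], simp_all add: L)
  apply (rule rw[OF pres_eq.sym[OF cj], where k=5], simp_all add: L)
  apply (rule rw[OF vvi, where k=4], simp_all add: L)
  apply (rule rw[OF pres_eq.sym[OF R5], where k=0], simp_all add: L)
  apply (rule pres_eq.sym)
  apply (rule rw[OF pres_eq.sym[OF vvi], where k=5], simp_all add: L)
  apply (rule rw[OF cj, where k=3], simp_all add: L)
  apply (rule rw[OF pres_eq.sym[OF br], where k=5], simp_all add: L)
  apply (rule pres_eq.refl, simp add: L)
  done

lemma B7G:
  assumes L: "fst vi \<in> S" "fst vj \<in> S" "fst mi \<in> S" "fst mj \<in> S" "fst gi \<in> S" "fst gj \<in> S"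
  and vvi: "pres_eq S R [vi,vi] []" and vvj: "pres_eq S R [vj,vj] []"
  and br: "pres_eq S R [vi,vj,vi] [vj,vi,vj]" and cj: "pres_eq S R [vi,mj,vi] [vj,mi,vj]"
  and cg: "pres_eq S R [vi,gj,vi] [vj,gi,vj]"
  and R6: "pres_eq S R [mi,vi,mj,vi,gj] [gj,vi,mj,vi,mi]"
  shows "pres_eq S R [mi,vi,mj,vj,gi,vi] [gj,vj,mi,vi,mj,vj]"
  apply (rule rw[OF pres_eq.sym[OF vvj], where k=5], simp_all add: L)
  apply (rule rw[OF pres_eq.sym[OF cg], where k=3], simp_all add: L)
  apply (rule rw[OF br, where k=5], simp_all add: L)
  apply (rule pres_eq.sym)
  apply (rule rw[OF pres_eq.sym[OF vvj], where k=3], simp_all add: L)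
  apply (rule rw[OF pres_eq.sym[OF cj], where k=1], simp_all add: L)
  apply (rule rw[OF pres_eq.sym[OF vvi], where k=7], simp_all add: L)
  apply (rule rw[OF cj, where k=5], simp_all add: L)
  apply (rule rw[OF vvj, where k=4], simp_all add: L)
  apply (rule rw[OF pres_eq.sym[OF R6], where k=0], simp_all add: L)
  apply (rule pres_eq.refl, simp add: L)
  done

lemma F7G:
  assumes L: "fst vi \<in> S" "fst si \<in> S" "fst ti \<in> S"
  and vv: "pres_eq S R [vi,vi] []" and st: "pres_eq S R [si,ti] [ti,si]"
  shows "pres_eq S R [si,vi,vi,ti,vi] [ti,vi,vi,si,vi]"
  apply (rule rw[OF vv, where k=1], simp_all add: L)
  apply (rule rw[OF st, where k=0], simp_all add: L)
  apply (rule pres_eq.sym)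
  apply (rule rw[OF vv, where k=1], simp_all add: L)
  apply (rule pres_eq.refl, simp add: L)
  done

lemma B3G:
  assumes L: "fst vi \<in> S" "fst mi \<in> S" "fst gi \<in> S"
  and R7: "pres_eq S R [mi,vi,gi] [gi,vi,mi]"
  shows "pres_eq S R [mi,vi,gi,vi] [gi,vi,mi,vi]"
  apply (rule rw[OF R7, where k=0], simp_all add: L)
  apply (rule pres_eq.refl, simp add: L)
  done

lemma cancel2:
  assumes L: "fst vi \<in> S" "fst mi \<in> S" and vv: "pres_eq S R [vi,vi] []"
  shows "pres_eq S R [mi,vi,vi] [mi]"
  apply (rule rw[OF vv, where k=1], simp_all add: L)
  apply (rule pres_eq.refl, simp add: L)
  done


lemma vmem[simp]: "Sig i \<in> vsg_gens n \<longleftrightarrow> idx n i" "Tau i \<in> vsg_gens n \<longleftrightarrow> idx n i"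
  "Vg i \<in> vsg_gens n \<longleftrightarrow> idx n i"
  by (auto simp: vsg_gens_def idx_def)

lemma fmem[simp]: "Mu i \<in> fus_gens n \<longleftrightarrow> idx n i" "Ga i \<in> fus_gens n \<longleftrightarrow> idx n i"
  "Vf i \<in> fus_gens n \<longleftrightarrow> idx n i"
  by (auto simp: fus_gens_def idx_def)

lemma vmem2: "g \<in> {Sig,Tau,Vg} \<Longrightarrow> g i \<in> vsg_gens n \<longleftrightarrow> idx n i" by auto
lemma fmem2: "g \<in> {Mu,Ga,Vf} \<Longrightarrow> g i \<in> fus_gens n \<longleftrightarrow> idx n i" by auto

lemma adj_sym: "adj i j \<Longrightarrow> adj j i" by (auto simp: adj_def)
lemma far_sym: "far i j \<Longrightarrow> far j i" by (auto simp: far_def)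

abbreviation "VS n \<equiv> vsg_gens n"
abbreviation "VR n \<equiv> vsg_rels n"
abbreviation "FS n \<equiv> fus_gens n"
abbreviation "FR n \<equiv> fus_rels n"

lemma wfV: "wfR (VS n) (VR n)"
  unfolding wfR_def vsg_rels_def by (auto simp: gen_def vmem2)

lemma wfF: "wfR (FS n) (FR n)"
  unfolding wfR_def fus_rels_def by (auto simp: gen_def fmem2)

context fixes n i j :: nat assumes ii: "idx n i" and jj: "idx n j" begin

lemma vR1: "pres_eq (VS n) (VR n) [(Vg i,True),(Vg i,True)] []"
  by (rule pres_eq.rel) (auto simp: vsg_rels_def gen_def ii)
lemma vR2: "pres_eq (VS n) (VR n) [(Sig i,True),(Tau i,True)] [(Tau i,True),(Sig i,True)]"
  by (rule pres_eq.rel) (auto simp: vsg_rels_def gen_def ii)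
lemma vR3: "adj i j \<Longrightarrow> pres_eq (VS n) (VR n) [(Sig i,True),(Sig j,True),(Sig i,True)] [(Sig j,True),(Sig i,True),(Sig j,True)]"
  by (rule pres_eq.rel) (auto simp: vsg_rels_def gen_def ii jj)
lemma vR4: "adj i j \<Longrightarrow> pres_eq (VS n) (VR n) [(Vg i,True),(Vg j,True),(Vg i,True)] [(Vg j,True),(Vg i,True),(Vg j,True)]"
  by (rule pres_eq.rel) (auto simp: vsg_rels_def gen_def ii jj)
lemma vR5: "adj i j \<Longrightarrow> pres_eq (VS n) (VR n) [(Vg i,True),(Sig j,True),(Vg i,True)] [(Vg j,True),(Sig i,True),(Vg j,True)]"
  by (rule pres_eq.rel) (auto simp: vsg_rels_def gen_def ii jj)
lemma vR6: "adj i j \<Longrightarrow> pres_eq (VS n) (VR n) [(Vg i,True),(Tau j,True),(Vg i,True)] [(Vg j,True),(Tau i,True),(Vg j,True)]"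
  by (rule pres_eq.rel) (auto simp: vsg_rels_def gen_def ii jj)
lemma vR7: "adj i j \<Longrightarrow> pres_eq (VS n) (VR n) [(Sig i,True),(Sig j,True),(Tau i,True)] [(Tau j,True),(Sig i,True),(Sig j,True)]"
  by (rule pres_eq.rel) (auto simp: vsg_rels_def gen_def ii jj)
lemma vR8: "far i j \<Longrightarrow> x \<in> {Sig,Tau,Vg} \<Longrightarrow> y \<in> {Sig,Tau,Vg} \<Longrightarrow>
   pres_eq (VS n) (VR n) [(x i,True),(y j,True)] [(y j,True),(x i,True)]"
  apply (rule pres_eq.rel) unfolding vsg_rels_def apply (rule UnI2)
  apply (rule CollectI, rule exI[of _ x], rule exI[of _ y], rule exI[of _ i], rule exI[of _ j])
  by (simp add: gen_def ii jj)

lemma fR1: "pres_eq (FS n) (FR n) [(Vf i,True),(Vf i,True)] []"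
  by (rule pres_eq.rel) (auto simp: fus_rels_def gen_def ii)
lemma fR2: "adj i j \<Longrightarrow> pres_eq (FS n) (FR n) [(Vf i,True),(Vf j,True),(Vf i,True)] [(Vf j,True),(Vf i,True),(Vf j,True)]"
  by (rule pres_eq.rel) (auto simp: fus_rels_def gen_def ii jj)
lemma fR3: "adj i j \<Longrightarrow> pres_eq (FS n) (FR n) [(Vf i,True),(Mu j,True),(Vf i,True)] [(Vf j,True),(Mu i,True),(Vf j,True)]"
  by (rule pres_eq.rel) (auto simp: fus_rels_def gen_def ii jj)
lemma fR4: "adj i j \<Longrightarrow> pres_eq (FS n) (FR n) [(Vf i,True),(Ga j,True),(Vf i,True)] [(Vf j,True),(Ga i,True),(Vf j,True)]"
  by (rule pres_eq.rel) (auto simp: fus_rels_def gen_def ii jj)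
lemma fR5: "adj i j \<Longrightarrow> pres_eq (FS n) (FR n) [(Mu j,True),(Vf j,True),(Mu i,True),(Vf j,True),(Mu i,True)] [(Mu i,True),(Vf j,True),(Mu i,True),(Vf j,True),(Mu j,True)]"
  by (rule pres_eq.rel) (auto simp: fus_rels_def gen_def ii jj)
lemma fR6: "adj i j \<Longrightarrow> pres_eq (FS n) (FR n) [(Mu j,True),(Vf j,True),(Mu i,True),(Vf j,True),(Ga i,True)] [(Ga i,True),(Vf j,True),(Mu i,True),(Vf j,True),(Mu j,True)]"
  by (rule pres_eq.rel) (auto simp: fus_rels_def gen_def ii jj)
lemma fR7: "pres_eq (FS n) (FR n) [(Mu i,True),(Vf i,True),(Ga i,True)] [(Ga i,True),(Vf i,True),(Mu i,True)]"
  by (rule pres_eq.rel) (auto simp: fus_rels_def gen_def ii)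
lemma fR8: "far i j \<Longrightarrow> x \<in> {Mu,Ga,Vf} \<Longrightarrow> y \<in> {Mu,Ga,Vf} \<Longrightarrow>
   pres_eq (FS n) (FR n) [(x i,True),(y j,True)] [(y j,True),(x i,True)]"
  apply (rule pres_eq.rel) unfolding fus_rels_def apply (rule UnI2)
  apply (rule CollectI, rule exI[of _ x], rule exI[of _ y], rule exI[of _ i], rule exI[of _ j])
  by (simp add: gen_def ii jj)

end


fun vsg_to_fus :: "vsg_gen \<Rightarrow> fus_gen word" where
  "vsg_to_fus (Sig i) = [(Mu i,True),(Vf i,True)]"
| "vsg_to_fus (Tau i) = [(Ga i,True),(Vf i,True)]"
| "vsg_to_fus (Vg i) = [(Vf i,True)]"

lemma f_letters: "g \<in> {Mu,Ga,Vf} \<Longrightarrow> a \<in> set (fus_to_vsg (g i)) \<Longrightarrow> \<exists>x\<in>{Sig,Tau,Vg}. a = (x i, True)"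
  by (auto simp: gen_def)

lemma g_letters: "g \<in> {Sig,Tau,Vg} \<Longrightarrow> a \<in> set (vsg_to_fus (g i)) \<Longrightarrow> \<exists>x\<in>{Mu,Ga,Vf}. a = (x i, True)"
  by auto

lemma f_wo: "g \<in> {Mu,Ga,Vf} \<Longrightarrow> idx n i \<Longrightarrow> word_over (VS n) (fus_to_vsg (g i))"
  by (auto simp: gen_def)

lemma g_wo: "g \<in> {Sig,Tau,Vg} \<Longrightarrow> idx n i \<Longrightarrow> word_over (FS n) (vsg_to_fus (g i))"
  by auto

lemma far_f: assumes "far i j" "idx n i" "idx n j" "g \<in> {Mu,Ga,Vf}" "h \<in> {Mu,Ga,Vf}"
  shows "pres_eq (VS n) (VR n) (fus_to_vsg (g i) @ fus_to_vsg (h j)) (fus_to_vsg (h j) @ fus_to_vsg (g i))"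
proof (rule comm_words)
  show "\<forall>a\<in>set (fus_to_vsg (g i)). \<forall>b\<in>set (fus_to_vsg (h j)). pres_eq (VS n) (VR n) [a, b] [b, a]"
  proof (intro ballI)
    fix a b assume "a \<in> set (fus_to_vsg (g i))" "b \<in> set (fus_to_vsg (h j))"
    then obtain x y where "x \<in> {Sig,Tau,Vg}" "y \<in> {Sig,Tau,Vg}" "a = (x i, True)" "b = (y j, True)"
      using f_letters assms by meson
    then show "pres_eq (VS n) (VR n) [a, b] [b, a]" using vR8 assms by simp
  qed
qed (use f_wo assms in auto)

lemma far_g: assumes "far i j" "idx n i" "idx n j" "g \<in> {Sig,Tau,Vg}" "h \<in> {Sig,Tau,Vg}"
  shows "pres_eq (FS n) (FR n) (vsg_to_fus (g i) @ vsg_to_fus (h j)) (vsg_to_fus (h j) @ vsg_to_fus (g i))"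
proof (rule comm_words)
  show "\<forall>a\<in>set (vsg_to_fus (g i)). \<forall>b\<in>set (vsg_to_fus (h j)). pres_eq (FS n) (FR n) [a, b] [b, a]"
  proof (intro ballI)
    fix a b assume "a \<in> set (vsg_to_fus (g i))" "b \<in> set (vsg_to_fus (h j))"
    then obtain x y where "x \<in> {Mu,Ga,Vf}" "y \<in> {Mu,Ga,Vf}" "a = (x i, True)" "b = (y j, True)"
      using g_letters assms by meson
    then show "pres_eq (FS n) (FR n) [a, b] [b, a]" using fR8 assms by simp
  qed
qed (use g_wo assms in auto)

lemma fwd: "(l,r) \<in> FR n \<Longrightarrow> pres_eq (VS n) (VR n) (subst_word fus_to_vsg l) (subst_word fus_to_vsg r)"
  unfolding fus_rels_def
  apply (elim UnE)
  subgoal by (clarsimp simp: gen_def) (rule vR1)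
  subgoal by (clarsimp simp: gen_def) (rule vR4)
  subgoal by (clarsimp simp: gen_def) (rule G1; auto intro: vR1 vR4 vR5)
  subgoal by (clarsimp simp: gen_def) (rule G1; auto intro: vR1 vR4 vR6)
  subgoal by (clarsimp simp: gen_def) (rule F5G; auto intro: vR1 vR4 vR5 vR3)
  subgoal by (clarsimp simp: gen_def) (rule F6G; auto intro: vR1 vR4 vR5 vR6 vR7 simp: adj_def)
  subgoal by (clarsimp simp: gen_def) (rule F7G; auto intro: vR1 vR2)
  subgoal apply clarsimp
    using far_f by (simp add: subst_word_def gen_def)
  done

lemma bwd: "(l,r) \<in> VR n \<Longrightarrow> pres_eq (FS n) (FR n) (subst_word vsg_to_fus l) (subst_word vsg_to_fus r)"
  unfolding vsg_rels_def
  apply (elim UnE)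
  subgoal by (clarsimp simp: gen_def) (rule fR1)
  subgoal by (clarsimp simp: gen_def) (rule B3G; auto intro: fR7)
  subgoal by (clarsimp simp: gen_def) (rule B4G; auto intro: fR1 fR2 fR3 fR5)
  subgoal by (clarsimp simp: gen_def) (rule fR2)
  subgoal by (clarsimp simp: gen_def) (rule G1; auto intro: fR1 fR2 fR3)
  subgoal by (clarsimp simp: gen_def) (rule G1; auto intro: fR1 fR2 fR4)
  subgoal by (clarsimp simp: gen_def) (rule B7G; auto intro: fR1 fR2 fR3 fR4 fR6 simp: adj_def)
  subgoal apply clarsimp
    using far_g by (simp add: subst_word_def gen_def)
  done


theorem mainTheorem2:
  fixes n :: nat
  assumes "n \<ge> 2"
  shows "induces_iso (fus_gens n) (fus_rels n) (vsg_gens n) (vsg_rels n) fus_to_vsg"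
proof -
  have fS: "\<forall>a\<in>FS n. word_over (VS n) (fus_to_vsg a)"
    by (auto simp: fus_gens_def idx_def gen_def)
  have gS: "\<forall>a\<in>VS n. word_over (FS n) (vsg_to_fus a)"
    by (auto simp: vsg_gens_def idx_def)
  have fR: "\<forall>(l,r)\<in>FR n. pres_eq (VS n) (VR n) (subst_word fus_to_vsg l) (subst_word fus_to_vsg r)"
    using fwd by blast
  have gR: "\<forall>(l,r)\<in>VR n. pres_eq (FS n) (FR n) (subst_word vsg_to_fus l) (subst_word vsg_to_fus r)"
    using bwd by blast
  have gf: "\<forall>a\<in>FS n. pres_eq (FS n) (FR n) (subst_word vsg_to_fus (fus_to_vsg a)) [(a,True)]"
  proof
    fix a assume a: "a \<in> FS n"
    then obtain g i where gi: "a = g i" "g \<in> {Mu,Ga,Vf}" "idx n i" by (auto simp: fus_gens_def idx_def)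
    then show "pres_eq (FS n) (FR n) (subst_word vsg_to_fus (fus_to_vsg a)) [(a,True)]"
      by (auto simp: gen_def intro!: cancel2 fR1 pres_eq.refl)
  qed
  have fg: "\<forall>a\<in>VS n. pres_eq (VS n) (VR n) (subst_word fus_to_vsg (vsg_to_fus a)) [(a,True)]"
  proof
    fix a assume a: "a \<in> VS n"
    then obtain g i where gi: "a = g i" "g \<in> {Sig,Tau,Vg}" "idx n i" by (auto simp: vsg_gens_def idx_def)
    then show "pres_eq (VS n) (VR n) (subst_word fus_to_vsg (vsg_to_fus a)) [(a,True)]"
      by (auto simp: gen_def intro!: cancel2 vR1 pres_eq.refl)
  qed
  show ?thesis
    unfolding induces_iso_def
  proof (intro conjI allI impI)
    show "\<forall>a\<in>FS n. word_over (VS n) (fus_to_vsg a)" by (rule fS)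
  next
    fix w w' assume "pres_eq (FS n) (FR n) w w'"
    then show "pres_eq (VS n) (VR n) (subst_word fus_to_vsg w) (subst_word fus_to_vsg w')"
      by (rule subst_cong[OF fS fR])
  next
    fix w w' assume h: "word_over (FS n) w \<and> word_over (FS n) w' \<and>
      pres_eq (VS n) (VR n) (subst_word fus_to_vsg w) (subst_word fus_to_vsg w')"
    have "pres_eq (FS n) (FR n) (subst_word vsg_to_fus (subst_word fus_to_vsg w))
        (subst_word vsg_to_fus (subst_word fus_to_vsg w'))"
      using h by (intro subst_cong[OF gS gR]) auto
    then have e: "pres_eq (FS n) (FR n) (subst_word (\<lambda>a. subst_word vsg_to_fus (fus_to_vsg a)) w)
        (subst_word (\<lambda>a. subst_word vsg_to_fus (fus_to_vsg a)) w')"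
      by (simp add: subst_comp)
    have 1: "pres_eq (FS n) (FR n) (subst_word (\<lambda>a. subst_word vsg_to_fus (fus_to_vsg a)) w) w"
      using h by (intro subst_id[OF gf wfF]) auto
    have 2: "pres_eq (FS n) (FR n) (subst_word (\<lambda>a. subst_word vsg_to_fus (fus_to_vsg a)) w') w'"
      using h by (intro subst_id[OF gf wfF]) auto
    show "pres_eq (FS n) (FR n) w w'"
      by (rule pres_eq.trans[OF pres_eq.sym[OF 1] pres_eq.trans[OF e 2]])
  next
    fix u assume u: "word_over (VS n) u"
    show "\<exists>w. word_over (FS n) w \<and> pres_eq (VS n) (VR n) (subst_word fus_to_vsg w) u"
    proof (intro exI conjI)
      show "word_over (FS n) (subst_word vsg_to_fus u)" by (rule subst_wo[OF gS u])
      show "pres_eq (VS n) (VR n) (subst_word fus_to_vsg (subst_word vsg_to_fus u)) u"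
        unfolding subst_comp by (rule subst_id[OF fg wfV u])
    qed
  qed
qed

end
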